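(* Let $\alpha\in\mathbb{R}$, let $\mathbb{Q}[x]^+_{x=\alpha}=\{p\in\mathbb{Q}[x]: p(\alpha)>0\}$, and suppose $\mathbb{Q}[x]^+_{x=\alpha}=H_1\sqcup H_2$ with $H_1,H_2$ disjoint subsets, each closed under addition and multiplication. If, for some $j\in\{1,2\}$, every polynomial of degree $1$ in $\mathbb{Q}[x]^+_{x=\alpha}$ belongs to $H_j$, then $H_j=\mathbb{Q}[x]^+_{x=\alpha}$. *)

theory Defs
  imports Complex_Main "HOL-Computational_Algebra.Polynomial"
begin

definition Qpos_at :: "real \<Rightarrow> rat poly set" where
  "Qpos_at \<alpha> = {p. poly (map_poly of_rat p) \<alpha> > 0}"

end

theory Submission
  imports Defs
begin


lemma mp_add: "map_poly (of_rat::rat\<Rightarrow>real) (p+q) = map_poly of_rat p + map_poly of_rat q"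
  by (rule poly_eqI) (simp add: coeff_map_poly of_rat_add)
lemma mp_diff: "map_poly (of_rat::rat\<Rightarrow>real) (p-q) = map_poly of_rat p - map_poly of_rat q"
  by (rule poly_eqI) (simp add: coeff_map_poly of_rat_diff)
lemma mp_minus: "map_poly (of_rat::rat\<Rightarrow>real) (-p) = - map_poly of_rat p"
  by (rule poly_eqI) (simp add: coeff_map_poly of_rat_minus)
lemma mp_mult: "map_poly (of_rat::rat\<Rightarrow>real) (p*q) = map_poly of_rat p * map_poly of_rat q"
  by (rule poly_eqI) (simp add: coeff_map_poly coeff_mult of_rat_sum of_rat_mult)
lemma mp_power: "map_poly (of_rat::rat\<Rightarrow>real) (p^n) = map_poly of_rat p ^ n"
  by (induction n) (simp_all add: mp_mult)
lemma mp_smult: "map_poly (of_rat::rat\<Rightarrow>real) (smult c p) = smult (of_rat c) (map_poly of_rat p)"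
  by (rule poly_eqI) (simp add: coeff_map_poly of_rat_mult)
lemma mp_lin: "poly (map_poly (of_rat::rat\<Rightarrow>real) [:a,b:]) x = of_rat a + x * of_rat b"
  by (simp add: map_poly_pCons)
lemma mp_const: "poly (map_poly (of_rat::rat\<Rightarrow>real) [:a:]) x = of_rat a"
  by (simp add: map_poly_pCons)

lemma main:
  fixes \<alpha> :: real and H :: "rat poly set"
  assumes sub: "H \<subseteq> Qpos_at \<alpha>"
    and add: "\<And>p q. p \<in> H \<Longrightarrow> q \<in> H \<Longrightarrow> p + q \<in> H"
    and mult: "\<And>p q. p \<in> H \<Longrightarrow> q \<in> H \<Longrightarrow> p * q \<in> H"
    and lin: "\<And>p. p \<in> Qpos_at \<alpha> \<Longrightarrow> degree p = 1 \<Longrightarrow> p \<in> H"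
  shows "H = Qpos_at \<alpha>"
proof -
  define ev where "ev q = poly (map_poly (of_rat::rat\<Rightarrow>real) q) \<alpha>" for q
  have Q: "q \<in> Qpos_at \<alpha> \<longleftrightarrow> ev q > 0" for q by (simp add: Qpos_at_def ev_def)
  have evlin: "ev [:a,b:] = of_rat a + \<alpha> * of_rat b" for a b by (simp add: ev_def mp_lin)
  have const: "[:c:] \<in> H" if "c > 0" for c
  proof -
    have "- \<alpha> < of_rat c - \<alpha>" using that by simp
    then obtain t :: rat where t: "- \<alpha> < of_rat t" "of_rat t < of_rat c - \<alpha>"
      using of_rat_dense by blast
    have 1: "[:t,1:] \<in> H" by (rule lin) (use t in \<open>simp_all add: Q evlin\<close>)
    have 2: "[:c-t,-1:] \<in> H" by (rule lin) (use t in \<open>simp_all add: Q evlin of_rat_diff\<close>)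
    have "[:t,1:] + [:c-t,-1:] = [:c:]" by simp
    with add[OF 1 2] show ?thesis by simp
  qed
  have pow: "q ^ n \<in> H" if "q \<in> H" for q n
    using that const[of 1] by (induction n) (auto intro: mult simp: one_pCons)
  have smult: "smult c q \<in> H" if "q \<in> H" "c > 0" for q c
    using mult[OF const[OF that(2)] that(1)] by simp
  have "p \<in> H" if "p \<in> Qpos_at \<alpha>" for p
    using that
  proof (induction "degree p" arbitrary: p rule: less_induct)
    case less
    define n where "n = degree p"
    define e where "e = ev p"
    have e: "e > 0" using less.prems by (simp add: Q e_def)
    show ?case
    proof (cases "n = 0")
      case True
      then have "p = [:coeff p 0:]" unfolding n_def by (rule degree_0_id[symmetric])
      moreover have "coeff p 0 > 0"
        using e unfolding e_def ev_def by (subst (asm) \<open>p = _\<close>) (simp add: map_poly_pCons)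
      ultimately show ?thesis using const by metis
    next
      case False
      then have n1: "n \<ge> 1" by simp
      define L where "L = lead_coeff p"
      have "p \<noteq> 0" using False n_def by auto
      then have L0: "L \<noteq> 0" by (simp add: L_def)
      define \<epsilon> where "\<epsilon> = min 1 (e / (2 * \<bar>of_rat L\<bar>))"
      have eps: "\<epsilon> > 0" "\<epsilon> \<le> 1" "\<bar>of_rat L\<bar> * \<epsilon> \<le> e / 2"
        using e L0 by (auto simp: \<epsilon>_def min_def field_simps)
      obtain a :: rat where a: "\<alpha> - \<epsilon> < of_rat a" "of_rat a < \<alpha>"
        using of_rat_dense[of "\<alpha> - \<epsilon>" \<alpha>] eps by auto
      obtain b :: rat where b: "\<alpha> < of_rat b" "of_rat b < \<alpha> + \<epsilon>"
        using of_rat_dense[of \<alpha> "\<alpha> + \<epsilon>"] eps by auto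
      define l1 where "l1 = [:-a,1:]"
      define l2 where "l2 = [:b,-1:]"
      have l1H: "l1 \<in> H" unfolding l1_def by (rule lin) (use a in \<open>simp_all add: Q evlin of_rat_minus\<close>)
      have l2H: "l2 \<in> H" unfolding l2_def by (rule lin) (use b in \<open>simp_all add: Q evlin of_rat_minus\<close>)
      define T where "T = (if L > 0 then smult L (l1^n) else smult (-L) (l1^(n-1) * l2))"
      have TH: "T \<in> H"
      proof (cases "L > 0")
        case True then show ?thesis by (simp add: T_def smult pow l1H)
      next
        case False
        then have "-L > 0" using L0 by linarith
        from smult[OF mult[OF pow[OF l1H] l2H] this] False show ?thesis by (simp add: T_def)
      qed
      have degl1: "degree (l1 ^ k) = k" for k unfolding l1_def by (rule degree_linear_power)
      have lcl1: "lead_coeff (l1 ^ k) = 1" for k by (simp add: lead_coeff_power l1_def)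
      have l1n0: "l1 ^ k \<noteq> 0" for k unfolding l1_def by simp
      have "degree T = n \<and> lead_coeff T = L"
      proof (cases "L > 0")
        case True
        then show ?thesis using degl1 lcl1 by (simp add: T_def)
      next
        case False
        have "degree (l1^(n-1) * l2) = n" using l1n0 n1
          by (subst degree_mult_eq) (auto simp: degl1 l2_def)
        moreover have "lead_coeff (l1^(n-1) * l2) = -1"
          by (simp only: lead_coeff_mult lcl1) (simp add: l2_def)
        ultimately show ?thesis using False L0 by (simp add: T_def)
      qed
      then have dT: "degree T = n" and lT: "lead_coeff T = L" by auto
      have deg: "degree (p - T) < n"
      proof (rule degree_lessI)
        show "p - T \<noteq> 0 \<or> 0 < n" using n1 by simp
        show "\<forall>k\<ge>n. coeff (p - T) k = 0"
        proof (intro allI impI)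
          fix k assume "n \<le> k"
          then consider "k = n" | "k > n" by linarith
          then show "coeff (p - T) k = 0"
          proof cases
            case 1 then show ?thesis using lT dT by (simp add: L_def n_def)
          next
            case 2 then show ?thesis using dT n_def by (simp add: coeff_eq_0)
          qed
        qed
      qed
      define u where "u = \<alpha> - of_rat a"
      define v where "v = of_rat b - \<alpha>"
      have u: "0 < u" "u < \<epsilon>" using a by (auto simp: u_def)
      have v: "0 < v" "v < \<epsilon>" using b by (auto simp: v_def)
      have evl1: "ev l1 = u" by (simp add: l1_def evlin u_def of_rat_minus)
      have evl2: "ev l2 = v" by (simp add: l2_def evlin v_def of_rat_minus)
      have up: "0 \<le> u^(n-1)" "u^(n-1) \<le> 1" using u eps by (auto intro: power_le_one)
      obtain w where w: "0 < w" "w < \<epsilon>" "ev T = \<bar>of_rat L\<bar> * u^(n-1) * w"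
      proof (cases "L > 0")
        case True
        have "u^n = u^(n-1) * u" using n1 by (metis power_minus_mult not_one_le_zero le_zero_eq neq0_conv)
        then show ?thesis using True u
          by (intro that[of u]) (auto simp: T_def ev_def mp_smult mp_power evl1[unfolded ev_def])
      next
        case False
        then show ?thesis using v L0
          by (intro that[of v]) (auto simp: T_def ev_def mp_smult mp_mult mp_power of_rat_minus mp_minus
              evl1[unfolded ev_def] evl2[unfolded ev_def])
      qed
      have "\<bar>of_rat L\<bar> * u^(n-1) * w \<le> \<bar>of_rat L\<bar> * 1 * \<epsilon>"
        using up w by (intro mult_mono) auto
      then have "ev T < e" using eps e w by linarith
      then have "p - T \<in> Qpos_at \<alpha>"
        by (simp add: Q ev_def mp_diff e_def)
      then have "p - T \<in> H" using less.hyps deg n_def by blast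
      from add[OF this TH] show ?thesis by simp
    qed
  qed
  then show ?thesis using sub by blast
qed

theorem lemma4p3:
  fixes \<alpha> :: real and H1 H2 :: "rat poly set" and j :: nat
  assumes part: "Qpos_at \<alpha> = H1 \<union> H2"
    and disj: "H1 \<inter> H2 = {}"
    and add1: "\<And>p q. p \<in> H1 \<Longrightarrow> q \<in> H1 \<Longrightarrow> p + q \<in> H1"
    and mult1: "\<And>p q. p \<in> H1 \<Longrightarrow> q \<in> H1 \<Longrightarrow> p * q \<in> H1"
    and add2: "\<And>p q. p \<in> H2 \<Longrightarrow> q \<in> H2 \<Longrightarrow> p + q \<in> H2"
    and mult2: "\<And>p q. p \<in> H2 \<Longrightarrow> q \<in> H2 \<Longrightarrow> p * q \<in> H2"
    and j: "j \<in> {1, 2}"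
    and lin: "\<And>p. p \<in> Qpos_at \<alpha> \<Longrightarrow> degree p = 1 \<Longrightarrow>
                 p \<in> (if j = 1 then H1 else H2)"
  shows "(if j = 1 then H1 else H2) = Qpos_at \<alpha>"
proof (cases "j = 1")
  case True
  have "H1 = Qpos_at \<alpha>"
  proof (rule main)
    show "H1 \<subseteq> Qpos_at \<alpha>" using part by blast
  next
    fix p assume "p \<in> Qpos_at \<alpha>" "degree p = 1"
    from lin[OF this] True show "p \<in> H1" by simp
  qed (use add1 mult1 in blast)+
  with True show ?thesis by simp
next
  case False
  have "H2 = Qpos_at \<alpha>"
  proof (rule main)
    show "H2 \<subseteq> Qpos_at \<alpha>" using part by blast
  next
    fix p assume "p \<in> Qpos_at \<alpha>" "degree p = 1"
    from lin[OF this] False show "p \<in> H2" by simp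
  qed (use add2 mult2 in blast)+
  with False show ?thesis by simp
qed

end
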